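(* Let $G$ be an $s$ clique-uniform graph of order $n$ with respect to a clique partition $F$ with $|F|=k$, and let $P_G$ be its clique partition graph. (i) If $k<n$, then $\mathcal E(P_G)\le\mathcal E(\mathcal Q_F)+\frac{2ks}{n}-2s$. (ii) If $k>n$, then $\mathcal E(P_G)\ge\mathcal E(\mathcal Q_F)+\frac{2ks}{n}-2s$. (iii) If $k=n$, then $\mathcal E(P_G)=\mathcal E(\mathcal Q_F)$.
   Context: All graphs are finite and simple, $V(G)=\{1,\dots,n\}$. A clique partition of $G$ is a set $F=\{C_1,\dots,C_k\}$ of cliques such that every edge lies in exactly one $C_j$; $G$ is $s$ clique-uniform if $|C_j|=s$ for all $j$. $\mathcal M_F$ is the $n\times k$ $(0,1)$-matrix with $(i,j)$-entry $1$ iff $i\in C_j$, and $\mathcal Q_F=\mathcal M_F\mathcal M_F^T$. The clique-degree $t_i^F$ is the number of cliques of $F$ containing $i$. $\mathcal E(\mathcal Q_F)=\sum_{i=1}^n|\lambda_i(\mathcal Q_F)-\bar t|$ with $\bar t=\frac1n\sum_i t_i^F$. The clique partition graph $P_G$ has vertex set $\{1,\dots,k\}$ with $i\ne j$ adjacent iff $C_i\cap C_j\ne\emptyset$, and $\mathcal E(P_G)$ is the sum of absolute values of its adjacency eigenvalues. *)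

theory Defs
  imports "Jordan_Normal_Form.Char_Poly"
begin

definition simple_graph :: "nat \<Rightarrow> nat set set \<Rightarrow> bool" where
  "simple_graph n E \<longleftrightarrow> (\<forall>e\<in>E. \<exists>u v. e = {u, v} \<and> u \<noteq> v \<and> u < n \<and> v < n)"

definition is_clique :: "nat \<Rightarrow> nat set set \<Rightarrow> nat set \<Rightarrow> bool" where
  "is_clique n E C \<longleftrightarrow> C \<noteq> {} \<and> C \<subseteq> {0..<n} \<and> (\<forall>u\<in>C. \<forall>v\<in>C. u \<noteq> v \<longrightarrow> {u, v} \<in> E)"

definition clique_partition :: "nat \<Rightarrow> nat set set \<Rightarrow> nat set list \<Rightarrow> bool" where
  "clique_partition n E F \<longleftrightarrow> distinct F \<and> (\<forall>C\<in>set F. is_clique n E C) \<and>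
     (\<forall>e\<in>E. \<exists>!j. j < length F \<and> e \<subseteq> F ! j)"

definition clique_uniform :: "nat \<Rightarrow> nat set list \<Rightarrow> bool" where
  "clique_uniform s F \<longleftrightarrow> (\<forall>C\<in>set F. card C = s)"

definition incidence_mat :: "nat \<Rightarrow> nat set list \<Rightarrow> real mat" where
  "incidence_mat n F = mat n (length F) (\<lambda>(i, j). if i \<in> F ! j then 1 else 0)"

definition Q_mat :: "nat \<Rightarrow> nat set list \<Rightarrow> real mat" where
  "Q_mat n F = incidence_mat n F * (incidence_mat n F)\<^sup>T"

definition clique_degree :: "nat set list \<Rightarrow> nat \<Rightarrow> nat" where
  "clique_degree F i = card {j. j < length F \<and> i \<in> F ! j}"

definition avg_clique_degree :: "nat \<Rightarrow> nat set list \<Rightarrow> real" where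
  "avg_clique_degree n F = (\<Sum>i<n. real (clique_degree F i)) / real n"

definition clique_partition_graph_adj :: "nat set list \<Rightarrow> real mat" where
  "clique_partition_graph_adj F = mat (length F) (length F)
     (\<lambda>(i, j). if i \<noteq> j \<and> F ! i \<inter> F ! j \<noteq> {} then 1 else 0)"

definition shifted_energy :: "real mat \<Rightarrow> real \<Rightarrow> real" where
  "shifted_energy A c =
     (let p = char_poly (map_mat complex_of_real A) in
      \<Sum>z\<in>{z. poly p z = 0}. real (order z p) * cmod (z - complex_of_real c))"

definition graph_energy :: "real mat \<Rightarrow> real" where
  "graph_energy A = shifted_energy A 0"

definition Q_energy :: "nat \<Rightarrow> nat set list \<Rightarrow> real" where
  "Q_energy n F = shifted_energy (Q_mat n F) (avg_clique_degree n F)"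

end

theory Submission
  imports Defs "Jordan_Normal_Form.Schur_Decomposition"
begin

abbreviation lin_prod :: "complex list \<Rightarrow> complex poly" where
  "lin_prod as \<equiv> (\<Prod>a\<leftarrow>as. [:- a, 1:])"

lemma lin_prod_nz: "lin_prod as \<noteq> 0"
proof -
  have "\<forall>a. [:- a, 1:] \<noteq> (0::complex poly)" by simp
  thus ?thesis by (subst prod_list_zero_iff) auto
qed

lemma lin_prod_order: "Polynomial.order z (lin_prod as) = count_list as z"
proof (induction as)
  case Nil
  then show ?case by (simp add: order_1)
next
  case (Cons a as)
  have "[:- a, 1:] * lin_prod as \<noteq> 0" using lin_prod_nz[of "a # as"] by simp
  hence "Polynomial.order z (lin_prod (a # as)) = Polynomial.order z [:- a, 1:] + Polynomial.order z (lin_prod as)"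
    by (simp only: list.map prod_list.Cons) (rule order_mult)
  then show ?case using Cons by (simp add: order_linear')
qed

lemma lin_prod_roots: "{z. poly (lin_prod as) z = 0} = set as"
  by (induction as) (auto simp: poly_prod_list)

lemma sum_list_count_gen:
  fixes f :: "'a \<Rightarrow> real"
  assumes "finite X" "set xs \<subseteq> X"
  shows "sum_list (map f xs) = (\<Sum>x\<in>X. real (count_list xs x) * f x)"
  using assms(2)
proof (induction xs)
  case Nil thus ?case by simp
next
  case (Cons a xs)
  have "(\<Sum>x\<in>X. real (count_list (a # xs) x) * f x)
     = (\<Sum>x\<in>X. real (count_list xs x) * f x) + (\<Sum>x\<in>X. (if a = x then f x else 0))"
    unfolding sum.distrib[symmetric] by (intro sum.cong refl) (simp add: distrib_right)
  also have "(\<Sum>x\<in>X. (if a = x then f x else 0)) = f a" using Cons.prems assms(1) by (simp add: sum.delta)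
  finally show ?case using Cons by simp
qed

lemma lin_prod_sum:
  fixes f :: "complex \<Rightarrow> real"
  shows "(\<Sum>z\<in>{z. poly (lin_prod as) z = 0}. real (Polynomial.order z (lin_prod as)) * f z) = sum_list (map f as)"
  unfolding lin_prod_roots lin_prod_order by (rule sum_list_count_gen[symmetric]) auto

lemma lin_prod_eq_sum:
  assumes "lin_prod as = lin_prod bs"
  shows "sum_list (map f as) = sum_list (map (f::complex \<Rightarrow> 'b::comm_monoid_add) bs)"
proof -
  have "count_list as z = count_list bs z" for z
    using arg_cong[OF assms, of "Polynomial.order z"] by (simp add: lin_prod_order)
  hence "mset as = mset bs" by (simp add: multiset_eq_iff count_mset)
  thus ?thesis by (metis mset_map sum_mset_sum_list)
qed

definition mtrace :: "'a::comm_ring_1 mat \<Rightarrow> 'a" where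
  "mtrace A = (\<Sum>i<dim_row A. A $$ (i, i))"

lemma mtrace_comm:
  fixes A B :: "'a::comm_ring_1 mat"
  assumes "A \<in> carrier_mat n m" "B \<in> carrier_mat m n"
  shows "mtrace (A * B) = mtrace (B * A)"
proof -
  have "mtrace (A * B) = (\<Sum>i<n. \<Sum>j<m. A $$ (i, j) * B $$ (j, i))"
    using assms unfolding mtrace_def
    by (auto simp: scalar_prod_def atLeast0LessThan intro!: sum.cong)
  also have "\<dots> = (\<Sum>j<m. \<Sum>i<n. B $$ (j, i) * A $$ (i, j))"
    by (subst sum.swap) (simp add: mult.commute)
  also have "\<dots> = mtrace (B * A)"
    using assms unfolding mtrace_def
    by (auto simp: scalar_prod_def atLeast0LessThan intro!: sum.cong)
  finally show ?thesis .
qed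

lemma eig_sum_trace:
  fixes A :: "complex mat"
  assumes A: "A \<in> carrier_mat n n" and c: "char_poly A = lin_prod es"
  shows "sum_list es = mtrace A"
proof -
  obtain B P Q where sd: "schur_decomposition A es = (B, P, Q)" by (cases "schur_decomposition A es") auto
  from schur_decomposition[OF A c sd] have sim: "similar_mat_wit A B P Q" and dg: "diag_mat B = es" by auto
  from sim A have Bc: "B \<in> carrier_mat n n" and Pc: "P \<in> carrier_mat n n" and Qc: "Q \<in> carrier_mat n n"
    and QP: "Q * P = 1\<^sub>m n" and AA: "A = P * B * Q"
    unfolding similar_mat_wit_def Let_def by auto
  have "mtrace A = mtrace (P * (B * Q))" using AA Pc Bc Qc by (simp add: assoc_mult_mat)
  also have "\<dots> = mtrace ((B * Q) * P)" by (rule mtrace_comm[OF Pc]) (use Bc Qc in auto)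
  also have "(B * Q) * P = B" using Bc Qc Pc QP by (simp add: assoc_mult_mat)
  finally have "mtrace A = mtrace B" .
  moreover have "sum_list es = mtrace B" unfolding dg[symmetric] diag_mat_def mtrace_def
    by (simp add: sum_list_distinct_conv_sum_set atLeast0LessThan)
  ultimately show ?thesis by simp
qed

lemma real_sym_eig_real:
  fixes A :: "real mat"
  assumes A: "A \<in> carrier_mat n n" and sym: "\<And>i j. i < n \<Longrightarrow> j < n \<Longrightarrow> A $$ (i, j) = A $$ (j, i)"
    and c: "char_poly (map_mat complex_of_real A) = lin_prod es" and e: "e \<in> set es"
  shows "Im e = 0"
proof -
  let ?A = "map_mat complex_of_real A"
  have Ac: "?A \<in> carrier_mat n n" using A by auto
  have "poly (char_poly ?A) e = 0" using e c lin_prod_roots[of es] by auto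
  hence "eigenvalue ?A e" using eigenvalue_root_char_poly[OF Ac] by simp
  then obtain v where v: "v \<in> carrier_vec n" "v \<noteq> 0\<^sub>v n" "?A *\<^sub>v v = e \<cdot>\<^sub>v v"
    unfolding eigenvalue_def eigenvector_def using Ac by auto
  have row: "(\<Sum>j<n. complex_of_real (A $$ (i, j)) * v $ j) = e * v $ i" if i: "i < n" for i
  proof -
    have "(?A *\<^sub>v v) $ i = e * v $ i" using v(3) v(1) i by simp
    thus ?thesis using i A v(1) by (simp add: scalar_prod_def atLeast0LessThan)
  qed
  define S where "S = (\<Sum>i<n. \<Sum>j<n. cnj (v $ i) * complex_of_real (A $$ (i, j)) * v $ j)"
  define N where "N = (\<Sum>i<n. cnj (v $ i) * v $ i)"
  have "S = (\<Sum>i<n. cnj (v $ i) * (\<Sum>j<n. complex_of_real (A $$ (i, j)) * v $ j))"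
    unfolding S_def by (simp add: sum_distrib_left mult.assoc)
  also have "\<dots> = (\<Sum>i<n. cnj (v $ i) * (e * v $ i))" using row by simp
  also have "\<dots> = e * N" unfolding N_def by (simp add: sum_distrib_left algebra_simps)
  finally have SN: "S = e * N" .
  have "cnj S = (\<Sum>i<n. \<Sum>j<n. v $ i * complex_of_real (A $$ (i, j)) * cnj (v $ j))"
    unfolding S_def by simp
  also have "\<dots> = (\<Sum>j<n. \<Sum>i<n. v $ i * complex_of_real (A $$ (i, j)) * cnj (v $ j))"
    by (rule sum.swap)
  also have "\<dots> = S" unfolding S_def using sym
    by (intro sum.cong refl) (simp add: algebra_simps)
  finally have "cnj S = S" .
  hence ImS: "Im S = 0" by (metis cnj.simps(2) complex_cnj_cancel_iff Im_complex_of_real complex_surj neg_equal_zero)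
  have Nr: "N = complex_of_real (\<Sum>i<n. (cmod (v $ i))\<^sup>2)"
    unfolding N_def of_real_sum by (intro sum.cong refl) (simp add: complex_norm_square[symmetric] mult.commute)
  have "\<exists>i<n. v $ i \<noteq> 0"
  proof (rule ccontr)
    assume "\<not> ?thesis"
    hence "v = 0\<^sub>v n" using v(1) by (intro eq_vecI) auto
    with v(2) show False by simp
  qed
  then obtain i where i: "i < n" "v $ i \<noteq> 0" by auto
  have "(\<Sum>i<n. (cmod (v $ i))\<^sup>2) \<ge> (cmod (v $ i))\<^sup>2"
    by (rule member_le_sum) (use i in auto)
  moreover have "(cmod (v $ i))\<^sup>2 > 0" using i by simp
  ultimately have pos: "(\<Sum>i<n. (cmod (v $ i))\<^sup>2) > 0" by linarith
  have "Im S = Im e * (\<Sum>i<n. (cmod (v $ i))\<^sup>2)" unfolding SN Nr by simp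
  with ImS pos show ?thesis by simp
qed

lemma sylvester_det:
  fixes M N :: "'a::idom mat"
  assumes M: "M \<in> carrier_mat n k" and N: "N \<in> carrier_mat k n"
  shows "z ^ k * det (z \<cdot>\<^sub>m 1\<^sub>m n - M * N) = z ^ n * det (z \<cdot>\<^sub>m 1\<^sub>m k - N * M)"
proof -
  define Z where "Z = four_block_mat (1\<^sub>m n) M N (z \<cdot>\<^sub>m 1\<^sub>m k)"
  define W where "W = four_block_mat (z \<cdot>\<^sub>m 1\<^sub>m n) (0\<^sub>m n k) (- N) (1\<^sub>m k)"
  define L where "L = four_block_mat (1\<^sub>m n) (0\<^sub>m n k) (- N) (1\<^sub>m k)"
  have Zc: "Z \<in> carrier_mat (n + k) (n + k)" unfolding Z_def using M N by auto
  have Wc: "W \<in> carrier_mat (n + k) (n + k)" unfolding W_def using M N by auto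
  have Lc: "L \<in> carrier_mat (n + k) (n + k)" unfolding L_def using M N by auto
  have MN: "M * N \<in> carrier_mat n n" and NM: "N * M \<in> carrier_mat k k" using M N by auto
  have c: "1\<^sub>m n \<in> carrier_mat n n" "z \<cdot>\<^sub>m 1\<^sub>m k \<in> carrier_mat k k" "z \<cdot>\<^sub>m 1\<^sub>m n \<in> carrier_mat n n"
    "0\<^sub>m n k \<in> carrier_mat n k" "- N \<in> carrier_mat k n" "1\<^sub>m k \<in> carrier_mat k k" using N by auto
  have ZW: "Z * W = four_block_mat (z \<cdot>\<^sub>m 1\<^sub>m n - M * N) M (0\<^sub>m k n) (z \<cdot>\<^sub>m 1\<^sub>m k)"
    unfolding Z_def W_def
    apply (subst mult_four_block_mat[OF c(1) M N c(2) c(3) c(4) c(5) c(6)])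
    apply (intro arg_cong4[where f = four_block_mat])
    using M N apply (auto intro!: eq_matI simp: scalar_prod_def if_distrib[of "(*) _"] if_distrib[of "\<lambda>x. x * _"] cong: if_cong)
    done
  have LZ: "L * Z = four_block_mat (1\<^sub>m n) M (0\<^sub>m k n) (z \<cdot>\<^sub>m 1\<^sub>m k - N * M)"
    unfolding Z_def L_def
    apply (subst mult_four_block_mat[OF c(1) c(4) c(5) c(6) c(1) M N c(2)])
    apply (intro arg_cong4[where f = four_block_mat])
    using M N apply (auto intro!: eq_matI simp: scalar_prod_def if_distrib[of "(*) _"] if_distrib[of "\<lambda>x. x * _"] cong: if_cong)
    done
  have d1: "det (Z * W) = det (z \<cdot>\<^sub>m 1\<^sub>m n - M * N) * z ^ k"
    unfolding ZW by (subst det_four_block_mat_lower_left_zero[of _ n _ k]) (use M N in auto)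
  have d2: "det W = z ^ n"
    unfolding W_def by (subst det_four_block_mat_upper_right_zero[of _ n _ k]) (use M N in auto)
  have d3: "det L = 1"
    unfolding L_def by (subst det_four_block_mat_upper_right_zero[of _ n _ k]) (use M N in auto)
  have d4: "det (L * Z) = det (z \<cdot>\<^sub>m 1\<^sub>m k - N * M)"
    unfolding LZ by (subst det_four_block_mat_lower_left_zero[of _ n _ k]) (use M N in auto)
  have "det Z = det (z \<cdot>\<^sub>m 1\<^sub>m k - N * M)" using d4 d3 det_mult[OF Lc Zc] by simp
  thus ?thesis using d1 d2 det_mult[OF Zc Wc] by (simp add: mult.commute)
qed

lemma char_poly_eval:
  fixes A :: "complex mat"
  assumes A: "A \<in> carrier_mat n n"
  shows "poly (char_poly A) z = det (z \<cdot>\<^sub>m 1\<^sub>m n - A)"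
  unfolding char_poly_matrix[OF A]
  by (rule arg_cong[where f = det], rule eq_matI) (use A in \<open>auto simp: char_matrix_def\<close>)

lemma sum_bound_le:
  fixes g :: "real \<Rightarrow> real"
  assumes "\<And>x. x \<in> set xs \<Longrightarrow> g x \<le> c"
  shows "sum_list (map g xs) \<le> real (length xs) * c"
  using assms by (induction xs) (auto simp: algebra_simps intro: add_mono)

lemma sum_bound_ge:
  fixes g :: "real \<Rightarrow> real"
  assumes "\<And>x. x \<in> set xs \<Longrightarrow> g x \<ge> c"
  shows "sum_list (map g xs) \<ge> real (length xs) * c"
  using assms by (induction xs) (auto simp: algebra_simps intro: add_mono)

lemma G1:
  fixes xs :: "real list" and u v :: real
  assumes x0: "x0 \<in> set xs" "x0 \<ge> u" and uv: "v \<le> u"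
  shows "sum_list (map (\<lambda>x. \<bar>x - u\<bar> - \<bar>x - v\<bar>) xs) \<le> (real (length xs) - 2) * (u - v)"
proof -
  have "sum_list (map (\<lambda>x. \<bar>x - u\<bar> - \<bar>x - v\<bar>) xs)
      = (\<bar>x0 - u\<bar> - \<bar>x0 - v\<bar>) + sum_list (map (\<lambda>x. \<bar>x - u\<bar> - \<bar>x - v\<bar>) (remove1 x0 xs))"
    by (rule sum_list_map_remove1[OF x0(1)])
  also have "\<bar>x0 - u\<bar> - \<bar>x0 - v\<bar> = v - u" using x0 uv by simp
  also have "sum_list (map (\<lambda>x. \<bar>x - u\<bar> - \<bar>x - v\<bar>) (remove1 x0 xs)) \<le> real (length (remove1 x0 xs)) * (u - v)"
    by (rule sum_bound_le) (use uv in auto)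
  also have "length (remove1 x0 xs) = length xs - 1" using x0 by (simp add: length_remove1)
  also have "real (length xs - 1) = real (length xs) - 1" using x0 by (cases xs) auto
  finally show ?thesis by (simp add: algebra_simps)
qed

lemma G2:
  fixes xs :: "real list" and u v :: real
  assumes x0: "x0 \<in> set xs" "x0 \<ge> v" and uv: "u \<le> v"
  shows "sum_list (map (\<lambda>x. \<bar>x - u\<bar> - \<bar>x - v\<bar>) xs) \<ge> - (real (length xs) - 2) * (v - u)"
proof -
  have e1: "sum_list (map (\<lambda>x. \<bar>x - u\<bar> - \<bar>x - v\<bar>) xs)
      = (\<bar>x0 - u\<bar> - \<bar>x0 - v\<bar>) + sum_list (map (\<lambda>x. \<bar>x - u\<bar> - \<bar>x - v\<bar>) (remove1 x0 xs))"
    by (rule sum_list_map_remove1[OF x0(1)])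
  have e2: "\<bar>x0 - u\<bar> - \<bar>x0 - v\<bar> = v - u" using x0 uv by simp
  have e3: "sum_list (map (\<lambda>x. \<bar>x - u\<bar> - \<bar>x - v\<bar>) (remove1 x0 xs)) \<ge> real (length (remove1 x0 xs)) * (u - v)"
    by (rule sum_bound_ge) (use uv in auto)
  have e4: "length (remove1 x0 xs) = length xs - 1" using x0 by (simp add: length_remove1)
  have e5: "real (length xs - 1) = real (length xs) - 1" using x0 by (cases xs) auto
  show ?thesis using e1 e2 e3 e4 e5 by (simp add: algebra_simps)
qed

lemma sum_lt_bound:
  fixes xs :: "real list"
  assumes "xs \<noteq> []" "\<And>x. x \<in> set xs \<Longrightarrow> x < c"
  shows "sum_list xs < real (length xs) * c"
  using assms
proof (induction xs)
  case Nil thus ?case by simp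
next
  case (Cons a xs)
  show ?case
  proof (cases "xs = []")
    case True thus ?thesis using Cons by simp
  next
    case False
    hence "sum_list xs < real (length xs) * c" using Cons by auto
    moreover have "a < c" using Cons by auto
    ultimately show ?thesis by (simp add: algebra_simps)
  qed
qed

lemma exists_ge_avg:
  fixes xs :: "real list"
  assumes "xs \<noteq> []"
  shows "\<exists>x\<in>set xs. x * real (length xs) \<ge> sum_list xs"
proof (rule ccontr)
  assume "\<not> ?thesis"
  hence "\<And>x. x \<in> set xs \<Longrightarrow> x < sum_list xs / real (length xs)" using assms
    by (auto simp: field_simps)
  from sum_lt_bound[OF assms this] show False using assms by simp
qed

lemma sum_ind_card:
  assumes "finite A"
  shows "(\<Sum>l\<in>A. (if P l then 1 else 0) :: real) = real (card {l\<in>A. P l})"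
proof -
  have "(\<Sum>l\<in>A. (if P l then 1 else 0) :: real) = (\<Sum>l\<in>A \<inter> {l. P l}. 1)"
    using sum.inter_restrict[OF assms, of "\<lambda>_. (1::real)" "{l. P l}"] by simp
  also have "A \<inter> {l. P l} = {l\<in>A. P l}" by auto
  finally show ?thesis by simp
qed

lemma cp_facts:
  assumes "clique_partition n E F" "j < length F"
  shows "F ! j \<noteq> {}" "F ! j \<subseteq> {0..<n}" "finite (F ! j)"
proof -
  have "F ! j \<in> set F" using assms(2) by simp
  thus "F ! j \<noteq> {}" "F ! j \<subseteq> {0..<n}" using assms(1) unfolding clique_partition_def is_clique_def by auto
  thus "finite (F ! j)" using finite_subset by blast
qed

lemma inter_card:
  assumes cp: "clique_partition n E F" and i: "i < length F" and j: "j < length F" and ij: "i \<noteq> j"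
  shows "card (F ! i \<inter> F ! j) = (if F ! i \<inter> F ! j = {} then 0 else 1)"
proof (cases "F ! i \<inter> F ! j = {}")
  case True thus ?thesis by simp
next
  case False
  have fin: "finite (F ! i \<inter> F ! j)" using cp_facts(3)[OF cp i] by auto
  have "card (F ! i \<inter> F ! j) \<le> Suc 0"
  proof (subst card_le_Suc0_iff_eq[OF fin], intro ballI, rule ccontr)
    fix a b assume a: "a \<in> F ! i \<inter> F ! j" and b: "b \<in> F ! i \<inter> F ! j" and ab: "a \<noteq> b"
    have "is_clique n E (F ! i)" using cp i unfolding clique_partition_def by auto
    hence e: "{a, b} \<in> E" using a b ab unfolding is_clique_def by auto
    from cp e obtain j0 where "\<forall>jj. jj < length F \<and> {a, b} \<subseteq> F ! jj \<longrightarrow> jj = j0"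
      unfolding clique_partition_def by metis
    hence "i = j0" "j = j0" using a b i j by auto
    with ij show False by simp
  qed
  moreover have "card (F ! i \<inter> F ! j) \<noteq> 0" using False fin by simp
  ultimately show ?thesis using False by simp
qed

lemma MtM:
  assumes cp: "clique_partition n E F" and cu: "clique_uniform s F"
  shows "(incidence_mat n F)\<^sup>T * incidence_mat n F
     = real s \<cdot>\<^sub>m 1\<^sub>m (length F) + clique_partition_graph_adj F"
proof (rule eq_matI)
  fix i j assume "i < dim_row (real s \<cdot>\<^sub>m 1\<^sub>m (length F) + clique_partition_graph_adj F)"
    "j < dim_col (real s \<cdot>\<^sub>m 1\<^sub>m (length F) + clique_partition_graph_adj F)"
  hence i: "i < length F" and j: "j < length F" by (auto simp: clique_partition_graph_adj_def)
  have "((incidence_mat n F)\<^sup>T * incidence_mat n F) $$ (i, j)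
      = (\<Sum>l\<in>{0..<n}. (if l \<in> F ! i then 1 else 0) * (if l \<in> F ! j then 1 else 0))"
    using i j by (simp add: incidence_mat_def scalar_prod_def)
  also have "\<dots> = (\<Sum>l\<in>{0..<n}. (if l \<in> F ! i \<inter> F ! j then 1 else 0))"
    by (intro sum.cong) auto
  also have "\<dots> = real (card {l\<in>{0..<n}. l \<in> F ! i \<inter> F ! j})" by (rule sum_ind_card) simp
  also have "{l\<in>{0..<n}. l \<in> F ! i \<inter> F ! j} = F ! i \<inter> F ! j" using cp_facts(2)[OF cp i] by auto
  also have "real (card (F ! i \<inter> F ! j)) = (real s \<cdot>\<^sub>m 1\<^sub>m (length F) + clique_partition_graph_adj F) $$ (i, j)"
  proof (cases "i = j")
    case True
    have "card (F ! i) = s" using cu i unfolding clique_uniform_def by auto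
    thus ?thesis using True i by (simp add: clique_partition_graph_adj_def)
  next
    case False
    thus ?thesis using inter_card[OF cp i j False] i j by (simp add: clique_partition_graph_adj_def)
  qed
  finally show "((incidence_mat n F)\<^sup>T * incidence_mat n F) $$ (i, j) = (real s \<cdot>\<^sub>m 1\<^sub>m (length F) + clique_partition_graph_adj F) $$ (i, j)" .
qed (auto simp: incidence_mat_def clique_partition_graph_adj_def)

lemma Q_diag:
  assumes "i < n"
  shows "Q_mat n F $$ (i, i) = real (clique_degree F i)"
proof -
  have "Q_mat n F $$ (i, i) = (\<Sum>j\<in>{0..<length F}. (if i \<in> F ! j then 1 else 0) * (if i \<in> F ! j then 1 else 0))"
    using assms by (simp add: Q_mat_def incidence_mat_def scalar_prod_def)
  also have "\<dots> = (\<Sum>j\<in>{0..<length F}. (if i \<in> F ! j then 1 else 0))" by (intro sum.cong) auto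
  also have "\<dots> = real (card {j\<in>{0..<length F}. i \<in> F ! j})" by (rule sum_ind_card) simp
  also have "{j\<in>{0..<length F}. i \<in> F ! j} = {j. j < length F \<and> i \<in> F ! j}" by auto
  finally show ?thesis unfolding clique_degree_def .
qed

lemma Q_sym:
  assumes "i < n" "j < n"
  shows "Q_mat n F $$ (i, j) = Q_mat n F $$ (j, i)"
  using assms by (simp add: Q_mat_def incidence_mat_def scalar_prod_def mult.commute)

lemma Re_sum_list: "sum_list (map Re xs) = Re (sum_list xs)"
  by (induction xs) auto

lemma lin_prod_shift: "poly (lin_prod as) (z - c) = poly (lin_prod (map (\<lambda>a. a + c) as)) z"
  by (induction as) (auto simp: algebra_simps)

lemma poly_lin_prod_rep: "poly (lin_prod (replicate m 0 @ xs)) z = z ^ m * poly (lin_prod xs) z"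
  by (induction m) auto

lemma energy_list:
  fixes A :: "real mat"
  assumes "char_poly (map_mat complex_of_real A) = lin_prod es"
  shows "shifted_energy A c = sum_list (map (\<lambda>z. cmod (z - complex_of_real c)) es)"
  unfolding shifted_energy_def Let_def assms by (rule lin_prod_sum)

lemma real_list_cmod:
  assumes "\<forall>z\<in>set es. Im z = 0"
  shows "sum_list (map (\<lambda>z. cmod (z - complex_of_real c)) es) = sum_list (map (\<lambda>x. \<bar>x - c\<bar>) (map Re es))"
proof -
  have "map (\<lambda>z. cmod (z - complex_of_real c)) es = map (\<lambda>x. \<bar>x - c\<bar>) (map Re es)"
    unfolding map_map by (rule map_cong) (use assms in \<open>auto simp: cmod_eq_Re\<close>)
  thus ?thesis by (simp only:)
qed

theorem mainTheorem11:
  fixes n k s :: nat and E :: "nat set set" and F :: "nat set list"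
  assumes "simple_graph n E"
    and "clique_partition n E F"
    and "clique_uniform s F"
    and "length F = k"
    and "k \<ge> 1"
  shows "(k < n \<longrightarrow> graph_energy (clique_partition_graph_adj F)
            \<le> Q_energy n F + 2 * real k * real s / real n - 2 * real s)
       \<and> (k > n \<longrightarrow> graph_energy (clique_partition_graph_adj F)
            \<ge> Q_energy n F + 2 * real k * real s / real n - 2 * real s)
       \<and> (k = n \<longrightarrow> graph_energy (clique_partition_graph_adj F) = Q_energy n F)"
proof -
  note cp = assms(2) and cu = assms(3) and kF = assms(4)
  have "0 < length F" using assms(4,5) by simp
  from cp_facts[OF cp this] have "n > 0" by auto
  define Mr where "Mr = incidence_mat n F"
  define Adj where "Adj = clique_partition_graph_adj F"
  define Mc where "Mc = map_mat complex_of_real Mr"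
  define Qc where "Qc = map_mat complex_of_real (Q_mat n F)"
  define Ac where "Ac = map_mat complex_of_real Adj"
  have Mr: "Mr \<in> carrier_mat n k" unfolding Mr_def incidence_mat_def kF[symmetric] by simp
  have Adjc: "Adj \<in> carrier_mat k k" unfolding Adj_def clique_partition_graph_adj_def kF[symmetric] by simp
  have Mcc: "Mc \<in> carrier_mat n k" using Mr unfolding Mc_def by simp
  have Qcc: "Qc \<in> carrier_mat n n" unfolding Qc_def Q_mat_def Mr_def[symmetric] using Mr by auto
  have Acc: "Ac \<in> carrier_mat k k" using Adjc unfolding Ac_def by simp
  have QcM: "Qc = Mc * Mc\<^sup>T"
    unfolding Qc_def Q_mat_def Mc_def Mr_def[symmetric]
    using of_real_hom.mat_hom_mult[of Mr n k "Mr\<^sup>T" n] Mr by (simp add: map_mat_transpose)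
  have McM: "Mc\<^sup>T * Mc = complex_of_real (real s) \<cdot>\<^sub>m 1\<^sub>m k + Ac"
  proof -
    have "Mc\<^sup>T * Mc = map_mat complex_of_real (Mr\<^sup>T * Mr)"
      unfolding Mc_def using Mr by (intro eq_matI) (auto simp: scalar_prod_def)
    also have "Mr\<^sup>T * Mr = real s \<cdot>\<^sub>m 1\<^sub>m k + Adj" unfolding Mr_def Adj_def kF[symmetric] by (rule MtM[OF cp cu])
    finally show ?thesis unfolding Ac_def using Adjc by (intro eq_matI) auto
  qed
  obtain qs where qs: "char_poly Qc = lin_prod qs" "length qs = n" using char_poly_factorized[OF Qcc] by blast
  obtain as where as: "char_poly Ac = lin_prod as" "length as = k" using char_poly_factorized[OF Acc] by blast
  have qs_real: "\<forall>q\<in>set qs. Im q = 0"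
  proof -
    have QR: "Q_mat n F \<in> carrier_mat n n" unfolding Q_mat_def Mr_def[symmetric] using Mr by auto
    show ?thesis using real_sym_eig_real[OF QR Q_sym qs(1)[unfolded Qc_def]] by blast
  qed
  have as_real: "\<forall>a\<in>set as. Im a = 0"
    using real_sym_eig_real[of Adj k as] as(1) Adjc unfolding Ac_def
    by (auto simp: Adj_def clique_partition_graph_adj_def kF[symmetric] Int_commute)
  have tr_as: "sum_list as = 0"
  proof -
    have "sum_list as = mtrace Ac" by (rule eig_sum_trace[OF Acc as(1)])
    also have "\<dots> = 0" unfolding mtrace_def Ac_def Adj_def clique_partition_graph_adj_def by simp
    finally show ?thesis .
  qed
  define tb where "tb = avg_clique_degree n F"
  have tr_qs: "sum_list qs = complex_of_real (real k * real s)"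
  proof -
    have "sum_list qs = mtrace Qc" by (rule eig_sum_trace[OF Qcc qs(1)])
    also have "\<dots> = mtrace (Mc\<^sup>T * Mc)" unfolding QcM by (rule mtrace_comm[OF Mcc]) (use Mcc in auto)
    also have "\<dots> = complex_of_real (real k * real s)" unfolding McM mtrace_def using Acc
      by (simp add: Ac_def Adj_def clique_partition_graph_adj_def kF)
    finally show ?thesis .
  qed
  have tb_eq: "tb = real k * real s / real n"
  proof -
    have "complex_of_real (\<Sum>i<n. real (clique_degree F i)) = mtrace Qc"
      unfolding mtrace_def Qc_def using Q_diag[of _ n F] by (simp add: Q_mat_def incidence_mat_def)
    also have "\<dots> = sum_list qs" using eig_sum_trace[OF Qcc qs(1)] by simp
    finally have "complex_of_real (\<Sum>i<n. real (clique_degree F i)) = complex_of_real (real k * real s)" using tr_qs by simp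
    hence "(\<Sum>i<n. real (clique_degree F i)) = real k * real s" by (simp only: of_real_eq_iff)
    thus ?thesis unfolding tb_def avg_clique_degree_def by simp
  qed
  have tb0: "tb \<ge> 0" unfolding tb_eq by simp
  have polyeq: "lin_prod (replicate k 0 @ qs) = lin_prod (replicate n 0 @ map (\<lambda>a. a + complex_of_real (real s)) as)"
  proof (rule poly_ext)
    fix z :: complex
    have "poly (lin_prod (replicate k 0 @ qs)) z = z ^ k * poly (char_poly Qc) z"
      by (simp add: poly_lin_prod_rep qs(1))
    also have "\<dots> = z ^ k * det (z \<cdot>\<^sub>m 1\<^sub>m n - Mc * Mc\<^sup>T)" using char_poly_eval[OF Qcc] QcM by simp
    also have "\<dots> = z ^ n * det (z \<cdot>\<^sub>m 1\<^sub>m k - Mc\<^sup>T * Mc)" by (rule sylvester_det[OF Mcc]) (use Mcc in auto)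
    also have "z \<cdot>\<^sub>m 1\<^sub>m k - Mc\<^sup>T * Mc = (z - complex_of_real (real s)) \<cdot>\<^sub>m 1\<^sub>m k - Ac"
      unfolding McM using Acc by (intro eq_matI) (auto simp: algebra_simps)
    also have "det \<dots> = poly (char_poly Ac) (z - complex_of_real (real s))" using char_poly_eval[OF Acc] by simp
    also have "\<dots> = poly (lin_prod (map (\<lambda>a. a + complex_of_real (real s)) as)) z"
      unfolding as(1) by (rule lin_prod_shift)
    finally show "poly (lin_prod (replicate k 0 @ qs)) z = poly (lin_prod (replicate n 0 @ map (\<lambda>a. a + complex_of_real (real s)) as)) z"
      by (simp add: poly_lin_prod_rep)
  qed
  have key: "real k * f 0 + sum_list (map f qs) = real n * f 0 + sum_list (map f (map (\<lambda>a. a + complex_of_real (real s)) as))"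
    for f :: "complex \<Rightarrow> real"
    using lin_prod_eq_sum[OF polyeq, of f] by (simp add: sum_list_replicate)
  define ras where "ras = map Re as"
  define rqs where "rqs = map Re qs"
  have EP: "graph_energy (clique_partition_graph_adj F) = sum_list (map (\<lambda>x. \<bar>x - 0\<bar>) ras)"
    unfolding graph_energy_def energy_list[OF as(1)[unfolded Ac_def Adj_def]] ras_def
    using real_list_cmod[OF as_real, of 0] by simp
  have EQ: "Q_energy n F = sum_list (map (\<lambda>x. \<bar>x - tb\<bar>) rqs)"
    unfolding Q_energy_def energy_list[OF qs(1)[unfolded Qc_def]] rqs_def tb_def[symmetric]
    using real_list_cmod[OF qs_real, of tb] by simp
  have lr: "length ras = k" "length rqs = n" using as(2) qs(2) unfolding ras_def rqs_def by auto
  have sr: "sum_list ras = 0" unfolding ras_def Re_sum_list tr_as by simp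
  have sq: "sum_list rqs = real k * real s" unfolding rqs_def Re_sum_list tr_qs by simp
  have shift: "map (\<lambda>z. cmod (z - complex_of_real c)) (map (\<lambda>a. a + complex_of_real (real s)) as)
      = map (\<lambda>z. cmod (z - complex_of_real (c - real s))) as" for c
    by (simp add: algebra_simps)
  have key1: "real k * tb + sum_list (map (\<lambda>x. \<bar>x - tb\<bar>) rqs) = real n * tb + sum_list (map (\<lambda>x. \<bar>x - (tb - real s)\<bar>) ras)"
    using key[of "\<lambda>z. cmod (z - complex_of_real tb)"] tb0
    unfolding shift real_list_cmod[OF as_real] real_list_cmod[OF qs_real] ras_def rqs_def by simp
  have key2: "real k * real s + sum_list (map (\<lambda>x. \<bar>x - real s\<bar>) rqs) = real n * real s + sum_list (map (\<lambda>x. \<bar>x - 0\<bar>) ras)"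
    using key[of "\<lambda>z. cmod (z - complex_of_real (real s))"]
    unfolding shift real_list_cmod[OF as_real] real_list_cmod[OF qs_real] ras_def rqs_def by simp
  have spos: "s > 0"
  proof -
    have "card (F ! 0) = s" using cu \<open>0 < length F\<close> unfolding clique_uniform_def by auto
    thus ?thesis using cp_facts[OF cp \<open>0 < length F\<close>] by auto
  qed
  have h1: "real n * tb = real k * real s" unfolding tb_eq using \<open>n > 0\<close> by simp
  have h2: "2 * real k * real s / real n = 2 * tb" unfolding tb_eq by simp
  have ras_ne: "ras \<noteq> []" "rqs \<noteq> []" using lr assms(5) \<open>n > 0\<close> by auto
  have P1: "graph_energy (clique_partition_graph_adj F) \<le> Q_energy n F + 2 * real k * real s / real n - 2 * real s"
    if kn: "k < n"
  proof -
    have "real n * tb < real n * real s" unfolding h1 using kn spos by simp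
    hence "tb < real s" using \<open>n > 0\<close> by simp
    obtain x0 where x0: "x0 \<in> set ras" "x0 * real (length ras) \<ge> sum_list ras" using exists_ge_avg[OF ras_ne(1)] by blast
    have "x0 \<ge> 0" using x0(2) sr lr assms(5) by (simp add: zero_le_mult_iff)
    from G1[OF x0(1) this, of "tb - real s"] \<open>tb < real s\<close>
    have g: "sum_list (map (\<lambda>x. \<bar>x - 0\<bar>) ras) - sum_list (map (\<lambda>x. \<bar>x - (tb - real s)\<bar>) ras) \<le> (real k - 2) * (0 - (tb - real s))"
      using lr by (simp add: sum_list_subtractf)
    have e: "(real k - 2) * (0 - (tb - real s)) = real k * real s - real k * tb - 2 * real s + 2 * tb"
      by (simp add: algebra_simps)
    show ?thesis unfolding EP EQ h2 using g key1 h1 e by linarith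
  qed
  have P2: "graph_energy (clique_partition_graph_adj F) \<ge> Q_energy n F + 2 * real k * real s / real n - 2 * real s"
    if kn: "k > n"
  proof -
    have "real n * tb > real n * real s" unfolding h1 using kn spos by simp
    hence "tb > real s" using \<open>n > 0\<close> by simp
    obtain x0 where x0: "x0 \<in> set rqs" "x0 * real (length rqs) \<ge> sum_list rqs" using exists_ge_avg[OF ras_ne(2)] by blast
    have "real n * tb \<le> real n * x0" using x0(2) sq lr h1 by (simp add: mult.commute)
    hence "x0 \<ge> tb" using \<open>n > 0\<close> by simp
    from G2[OF x0(1) this, of "real s"] \<open>tb > real s\<close>
    have g: "sum_list (map (\<lambda>x. \<bar>x - real s\<bar>) rqs) - sum_list (map (\<lambda>x. \<bar>x - tb\<bar>) rqs) \<ge> - (real n - 2) * (tb - real s)"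
      using lr by (simp add: sum_list_subtractf)
    have e: "- (real n - 2) * (tb - real s) = - (real n * tb) + real n * real s + 2 * tb - 2 * real s"
      by (simp add: algebra_simps)
    show ?thesis unfolding EP EQ h2 using g key2 h1 e by linarith
  qed
  have P3: "graph_energy (clique_partition_graph_adj F) = Q_energy n F" if kn: "k = n"
  proof -
    have "tb = real s" using h1 kn \<open>n > 0\<close> by simp
    thus ?thesis unfolding EP EQ using key2 kn by simp
  qed
  show ?thesis using P1 P2 P3 by blast
qed

end
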